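(* Let $p:[0,\infty)\to\mathbb{R}$ be a non-increasing pricing function. Then the set of buyer types $$\Big\{(\theta,v)\ \Big|\ \min_{t\ge 0}\{p(t)+\theta t\}> v\Big\}$$ (the types who do not buy the item, whatever time they spend) is a convex subset of $\mathbb{R}^2$.
   Context: Model: a seller sells identical items in unlimited supply to unit-demand buyers. A buyer's type is $(\theta,v)$, where $\theta\ge 0$ is her cost per unit time (CPUT) and $v$ her valuation for the item. The seller posts a non-increasing pricing function $p$: a buyer who spends time $t\ge 0$ on the deal pays $p(t)$. A buyer of type $(\theta,v)$ buys the item iff $\min_{t\ge 0}\{p(t)+\theta t\}\le v$, where the minimum is taken to exist, as the model assumes when it defines the set $\arg\min_{t\ge 0}\{p(t)+\theta t\}$ of the buyer's best actions. *)

theory Defs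
  imports "HOL-Analysis.Analysis"
begin

text \<open>Minimal total payment (price plus time cost) of a buyer with cost per unit time
  theta facing pricing function p, i.e. min over t \<ge> 0 of p t + theta * t.
  Under the model's standing assumption that this minimum is attained, the infimum
  below is that minimum.\<close>
definition min_cost :: "(real \<Rightarrow> real) \<Rightarrow> real \<Rightarrow> real" where
  "min_cost p \<theta> = Inf ((\<lambda>t. p t + \<theta> * t) ` {0..})"

definition min_attained :: "(real \<Rightarrow> real) \<Rightarrow> real \<Rightarrow> bool" where
  "min_attained p \<theta> \<longleftrightarrow> (\<exists>t\<ge>0. \<forall>s\<ge>0. p t + \<theta> * t \<le> p s + \<theta> * s)"

end

theory Submission
  imports Defs
begin

lemma mc_attained:
  assumes "min_attained p \<theta>"
  shows "\<exists>t\<ge>0. min_cost p \<theta> = p t + \<theta> * t \<and> (\<forall>s\<ge>0. min_cost p \<theta> \<le> p s + \<theta> * s)"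
proof -
  obtain t where t: "t \<ge> 0" "\<forall>s\<ge>0. p t + \<theta> * t \<le> p s + \<theta> * s"
    using assms unfolding min_attained_def by blast
  have "min_cost p \<theta> = p t + \<theta> * t"
    unfolding min_cost_def
    by (rule cInf_eq_minimum) (use t in auto)
  then show ?thesis using t by auto
qed

theorem lemma1:
  fixes p :: "real \<Rightarrow> real"
  assumes "antimono_on {0..} p"
    and "\<And>\<theta>. \<theta> \<ge> 0 \<Longrightarrow> min_attained p \<theta>"
  shows "convex {(\<theta>::real, v::real). \<theta> \<ge> 0 \<and> min_cost p \<theta> > v}"
  unfolding convex_def
proof (intro ballI allI impI)
  fix x y :: "real \<times> real" and u w :: real
  assume x: "x \<in> {(\<theta>, v). 0 \<le> \<theta> \<and> v < min_cost p \<theta>}"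
    and y: "y \<in> {(\<theta>, v). 0 \<le> \<theta> \<and> v < min_cost p \<theta>}"
    and u: "0 \<le> u" and w: "0 \<le> w" and uw: "u + w = 1"
  obtain a b where xab: "x = (a, b)" by (cases x)
  obtain c d where ycd: "y = (c, d)" by (cases y)
  have a: "a \<ge> 0" "b < min_cost p a" using x xab by auto
  have c: "c \<ge> 0" "d < min_cost p c" using y ycd by auto
  define th where "th = u * a + w * c"
  have th0: "th \<ge> 0" using a c u w unfolding th_def by simp
  obtain t where t: "t \<ge> 0" "min_cost p th = p t + th * t"
    using mc_attained[OF assms(2)[OF th0]] by blast
  have ma: "min_cost p a \<le> p t + a * t"
    using mc_attained[OF assms(2)[OF a(1)]] t(1) by blast
  have mc: "min_cost p c \<le> p t + c * t"
    using mc_attained[OF assms(2)[OF c(1)]] t(1) by blast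
  have eq: "p t + th * t = u * (p t + a * t) + w * (p t + c * t)"
    using uw unfolding th_def by algebra
  have "u * b + w * d < u * (p t + a * t) + w * (p t + c * t)"
  proof (cases "u = 0")
    case True
    then show ?thesis using uw c mc by auto
  next
    case False
    then have "u > 0" using u by simp
    then have "u * b < u * (p t + a * t)" using a ma by simp
    moreover have "w * d \<le> w * (p t + c * t)" using w c mc
      by (intro mult_left_mono) auto
    ultimately show ?thesis by linarith
  qed
  then show "u *\<^sub>R x + w *\<^sub>R y \<in> {(\<theta>, v). 0 \<le> \<theta> \<and> v < min_cost p \<theta>}"
    using th0 t eq xab ycd unfolding th_def by auto
qed

end
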